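(* Let $\mathbf{K}$ be an algebraically closed field of arbitrary characteristic, complete with respect to a non-archimedean absolute value. Let $f\colon \mathbf{K}\rightarrow\mathbb{P}^2(\mathbf{K})$ be a nonconstant analytic curve. Let $L$ be a line and $C$ be a nonsingular conic in $\mathbb{P}^2(\mathbf{K})$, and suppose that $L$ and $C$ intersect transversally. If $f$ avoids $L$ and $C$ (i.e. $f(\mathbf{K})\cap(L\cup C)=\varnothing$), then the image of $f$ is contained in the tangent line of $C$ at some intersection point of $L$ and $C$.
   Context: An analytic map $f\colon\mathbf{K}\to\mathbb{P}^2(\mathbf{K})$ is one given by a reduced representation $(f_0,f_1,f_2)$ of entire functions (power series converging on all of $\mathbf{K}$) without common zeros. *)

theory Defs
  imports Complex_Main "HOL-Computational_Algebra.Polynomial"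
begin

definition algebraically_closed :: "'a::field itself \<Rightarrow> bool" where
  "algebraically_closed _ \<longleftrightarrow> (\<forall>p :: 'a poly. degree p > 0 \<longrightarrow> (\<exists>x. poly p x = 0))"

definition nonarch_abs :: "('a::field \<Rightarrow> real) \<Rightarrow> bool" where
  "nonarch_abs av \<longleftrightarrow>
     (\<forall>x. av x \<ge> 0) \<and> (\<forall>x. av x = 0 \<longleftrightarrow> x = 0) \<and>
     (\<forall>x y. av (x * y) = av x * av y) \<and>
     (\<forall>x y. av (x + y) \<le> max (av x) (av y))"

definition av_complete :: "('a::field \<Rightarrow> real) \<Rightarrow> bool" where
  "av_complete av \<longleftrightarrow>
     (\<forall>X :: nat \<Rightarrow> 'a.
        (\<forall>e>0. \<exists>N. \<forall>m\<ge>N. \<forall>n\<ge>N. av (X m - X n) < e) \<longrightarrow>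
        (\<exists>L. (\<lambda>n. av (X n - L)) \<longlonglongrightarrow> 0))"

definition av_entire :: "('a::field \<Rightarrow> real) \<Rightarrow> ('a \<Rightarrow> 'a) \<Rightarrow> bool" where
  "av_entire av g \<longleftrightarrow>
     (\<exists>c :: nat \<Rightarrow> 'a. \<forall>z. (\<lambda>N. av ((\<Sum>n<N. c n * z ^ n) - g z)) \<longlonglongrightarrow> 0)"

section \<open>Projective plane: homogeneous coordinates x 0, x 1, x 2\<close>

definition nonzero3 :: "(nat \<Rightarrow> 'a::field) \<Rightarrow> bool" where
  "nonzero3 x \<longleftrightarrow> (\<exists>i<3. x i \<noteq> 0)"

text \<open>Two coordinate vectors are proportional (same projective point / same line).\<close>
definition proportional3 :: "(nat \<Rightarrow> 'a::field) \<Rightarrow> (nat \<Rightarrow> 'a) \<Rightarrow> bool" where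
  "proportional3 u v \<longleftrightarrow> (\<forall>i<3. \<forall>j<3. u i * v j = u j * v i)"

text \<open>Linear form with coefficients a; the line is {[x]. lform a x = 0}, a nonzero.\<close>
definition lform :: "(nat \<Rightarrow> 'a::field) \<Rightarrow> (nat \<Rightarrow> 'a) \<Rightarrow> 'a" where
  "lform a x = (\<Sum>i<3. a i * x i)"

definition qform :: "(nat \<Rightarrow> nat \<Rightarrow> 'a::field) \<Rightarrow> (nat \<Rightarrow> 'a) \<Rightarrow> 'a" where
  "qform q x = (\<Sum>i<3. \<Sum>j<3. if i \<le> j then q i j * x i * x j else 0)"

text \<open>Formal partial derivative of Q with respect to x k (valid in every characteristic).\<close>
definition qgrad :: "(nat \<Rightarrow> nat \<Rightarrow> 'a::field) \<Rightarrow> (nat \<Rightarrow> 'a) \<Rightarrow> nat \<Rightarrow> 'a" where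
  "qgrad q x k = (\<Sum>i<3. \<Sum>j<3. if i \<le> j then
       q i j * ((if i = k then x j else 0) + (if j = k then x i else 0)) else 0)"

definition is_line :: "(nat \<Rightarrow> 'a::field) \<Rightarrow> bool" where
  "is_line a \<longleftrightarrow> nonzero3 a"

definition nonsingular_conic :: "(nat \<Rightarrow> nat \<Rightarrow> 'a::field) \<Rightarrow> bool" where
  "nonsingular_conic q \<longleftrightarrow>
     (\<exists>i<3. \<exists>j<3. i \<le> j \<and> q i j \<noteq> 0) \<and>
     \<not> (\<exists>x. nonzero3 x \<and> qform q x = 0 \<and> (\<forall>k<3. qgrad q x k = 0))"

text \<open>The tangent line of C at p has coefficients qgrad q p.
  L and C intersect transversally: at every common point, the tangent line of C
  differs from L.\<close>
definition transversal :: "(nat \<Rightarrow> 'a::field) \<Rightarrow> (nat \<Rightarrow> nat \<Rightarrow> 'a) \<Rightarrow> bool" where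
  "transversal a q \<longleftrightarrow>
     (\<forall>p. nonzero3 p \<and> lform a p = 0 \<and> qform q p = 0 \<longrightarrow>
          \<not> proportional3 (qgrad q p) a)"

text \<open>Reduced representation (f 0, f 1, f 2) of entire functions without common zeros.\<close>
definition analytic_curve :: "('a::field \<Rightarrow> real) \<Rightarrow> (nat \<Rightarrow> 'a \<Rightarrow> 'a) \<Rightarrow> bool" where
  "analytic_curve av f \<longleftrightarrow> (\<forall>i<3. av_entire av (f i)) \<and> (\<forall>z. nonzero3 (\<lambda>i. f i z))"

definition nonconstant_curve :: "(nat \<Rightarrow> 'a::field \<Rightarrow> 'a) \<Rightarrow> bool" where
  "nonconstant_curve f \<longleftrightarrow> (\<exists>z w. \<not> proportional3 (\<lambda>i. f i z) (\<lambda>i. f i w))"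

end

theory Submission
  imports Defs
begin

locale naf =
  fixes av :: "'a::field \<Rightarrow> real"
  assumes na: "nonarch_abs av"
begin

lemma av_nonneg[simp]: "0 \<le> av x" using na unfolding nonarch_abs_def by blast
lemma av_0[simp]: "av 0 = 0" using na unfolding nonarch_abs_def by blast
lemma av_eq_0[simp]: "av x = 0 \<longleftrightarrow> x = 0" using na unfolding nonarch_abs_def by blast
lemma av_mult: "av (x * y) = av x * av y" using na unfolding nonarch_abs_def by blast
lemma av_ultra: "av (x + y) \<le> max (av x) (av y)" using na unfolding nonarch_abs_def by blast
lemma av_pos: "x \<noteq> 0 \<Longrightarrow> 0 < av x" using av_nonneg[of x] av_eq_0[of x] by linarith

lemma av_1[simp]: "av 1 = 1"
proof -
  have "av 1 = av 1 * av 1" using av_mult[of 1 1] by simp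
  moreover have "av 1 \<noteq> 0" by simp
  ultimately show ?thesis by (metis mult_cancel_right1)
qed

lemma av_m1[simp]: "av (-1) = 1"
proof -
  have "av (-1) * av (-1) = av ((-1) * (-1))" by (rule av_mult[symmetric])
  also have "\<dots> = 1" by simp
  finally have "av (-1) * av (-1) = 1" .
  then have "av (-1) ^ 2 = 1" by (simp add: power2_eq_square)
  then have "av (-1) = 1 \<or> av (-1) = -1" using power2_eq_1_iff by blast
  then show ?thesis using av_nonneg[of "-1"] by linarith
qed

lemma av_minus[simp]: "av (- x) = av x"
  using av_mult[of "-1" x] by simp

lemma av_sym: "av (x - y) = av (y - x)"
  by (metis av_minus minus_diff_eq)

lemma av_diff_ultra: "av (x - y) \<le> max (av x) (av y)"
  using av_ultra[of x "-y"] by simp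

lemma av_power: "av (x ^ n) = av x ^ n"
  by (induction n) (auto simp: av_mult)

lemma av_inverse: "av (inverse x) = inverse (av x)"
proof (cases "x = 0")
  case False
  have "av (inverse x * x) = av (inverse x) * av x" by (rule av_mult)
  then have "av (inverse x) * av x = 1" using False by simp
  then show ?thesis by (metis inverse_unique mult.commute)
qed simp

lemma av_divide: "av (x / y) = av x / av y"
  by (simp add: divide_inverse av_mult av_inverse)

lemma av_of_nat_le: "av (of_nat n) \<le> 1"
proof (induction n)
  case (Suc n)
  have "av (of_nat (Suc n)) = av (1 + of_nat n)" by simp
  also have "\<dots> \<le> max (av 1) (av (of_nat n))" by (rule av_ultra)
  finally show ?case using Suc by simp
qed simp

lemma av_add_le: "av x \<le> B \<Longrightarrow> av y \<le> B \<Longrightarrow> av (x + y) \<le> B"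
  using av_ultra[of x y] by linarith

lemma av_diff_le: "av x \<le> B \<Longrightarrow> av y \<le> B \<Longrightarrow> av (x - y) \<le> B"
  using av_diff_ultra[of x y] by linarith

lemma av_add_less: "av x < B \<Longrightarrow> av y < B \<Longrightarrow> av (x + y) < B"
  using av_ultra[of x y] by linarith

lemma av_sum_le:
  assumes "\<And>i. i \<in> A \<Longrightarrow> av (f i) \<le> B" "0 \<le> B"
  shows "av (sum f A) \<le> B"
  using assms
proof (induction A rule: infinite_finite_induct)
  case (insert x F)
  then show ?case by (simp add: av_add_le)
qed auto

lemma av_sum_less:
  assumes "\<And>i. i \<in> A \<Longrightarrow> av (f i) < B" "0 < B"
  shows "av (sum f A) < B"
  using assms
proof (induction A rule: infinite_finite_induct)
  case (insert x F)
  then show ?case by (simp add: av_add_less)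
qed auto

lemma av_add_strict: "av y < av x \<Longrightarrow> av (x + y) = av x"
proof -
  assume h: "av y < av x"
  have "av (x + y) \<le> av x" using av_ultra[of x y] h by linarith
  moreover have "av x \<le> max (av (x + y)) (av y)"
    using av_diff_ultra[of "x + y" y] by simp
  ultimately show ?thesis using h by linarith
qed

lemma av_triangle: "av (x + y) \<le> av x + av y"
  using av_ultra[of x y] av_nonneg[of x] av_nonneg[of y] by linarith

definition avlim :: "(nat \<Rightarrow> 'a) \<Rightarrow> 'a \<Rightarrow> bool" where
  "avlim X L \<longleftrightarrow> (\<lambda>n. av (X n - L)) \<longlonglongrightarrow> 0"

lemma sandwich0:
  fixes u w :: "nat \<Rightarrow> real"
  assumes "\<And>n. 0 \<le> u n" "\<And>n. u n \<le> w n" "w \<longlonglongrightarrow> 0"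
  shows "u \<longlonglongrightarrow> 0"
  by (rule tendsto_sandwich[of "\<lambda>_. 0" u sequentially w]) (use assms in auto)

lemma avlim_unique:
  assumes "avlim X L1" "avlim X L2" shows "L1 = L2"
proof -
  have "av (L1 - L2) \<le> av (X n - L1) + av (X n - L2)" for n
  proof -
    have "L1 - L2 = (X n - L2) + (-(X n - L1))" by simp
    then have "av (L1 - L2) \<le> av (X n - L2) + av (-(X n - L1))" using av_triangle[of "X n - L2" "-(X n - L1)"] by simp
    then show ?thesis by (simp add: av_sym[of L1] add.commute)
  qed
  moreover have "(\<lambda>n. av (X n - L1) + av (X n - L2)) \<longlonglongrightarrow> 0"
    using tendsto_add[OF assms[unfolded avlim_def]] by simp
  ultimately have "av (L1 - L2) \<le> 0"
    using LIMSEQ_le_const[of "\<lambda>n. av (X n - L1) + av (X n - L2)" 0 "av (L1 - L2)"] by blast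
  then show ?thesis using av_nonneg[of "L1 - L2"] by simp
qed

lemma avlim_eventually_const:
  assumes "\<And>n. n \<ge> M \<Longrightarrow> X n = L" shows "avlim X L"
  unfolding avlim_def
proof (rule LIMSEQ_offset[of _ M])
  have "(\<lambda>n. av (X (n + M) - L)) = (\<lambda>n. 0)" using assms by (auto simp: fun_eq_iff)
  then show "(\<lambda>n. av (X (n + M) - L)) \<longlonglongrightarrow> 0" by simp
qed

lemma avlim_add:
  assumes h1: "avlim X L" and h2: "avlim Y M"
  shows "avlim (\<lambda>n. X n + Y n) (L + M)"
  unfolding avlim_def
proof (rule sandwich0)
  fix n
  have eq: "X n + Y n - (L + M) = (X n - L) + (Y n - M)" by simp
  show "av (X n + Y n - (L + M)) \<le> av (X n - L) + av (Y n - M)"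
    unfolding eq by (rule av_triangle)
next
  show "(\<lambda>n. av (X n - L) + av (Y n - M)) \<longlonglongrightarrow> 0"
    using tendsto_add[OF h1[unfolded avlim_def] h2[unfolded avlim_def]] by simp
qed simp

lemma avlim_cmult: "avlim X L \<Longrightarrow> avlim (\<lambda>n. k * X n) (k * L)"
proof -
  assume "avlim X L"
  then have "(\<lambda>n. av k * av (X n - L)) \<longlonglongrightarrow> 0" unfolding avlim_def
    using tendsto_mult_left[of _ 0 sequentially "av k"] by simp
  moreover have "av k * av (X n - L) = av (k * X n - k * L)" for n
    by (simp add: av_mult flip: right_diff_distrib)
  ultimately show ?thesis unfolding avlim_def by simp
qed

lemma avlim_shift: "avlim X L \<Longrightarrow> avlim (\<lambda>n. X (n + k)) L"
  unfolding avlim_def by (rule LIMSEQ_ignore_initial_segment)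

end

context naf
begin

lemma conv0_bounded:
  fixes u :: "nat \<Rightarrow> real"
  assumes "u \<longlonglongrightarrow> 0" shows "\<exists>B>0. \<forall>n. u n \<le> B"
proof -
  have "Bseq u" using assms convergent_imp_Bseq convergentI by blast
  then obtain K where "K > 0" "\<forall>n. norm (u n) \<le> K" by (auto elim: BseqE)
  then show ?thesis by (metis abs_le_D1 real_norm_def)
qed

lemma tendsto0_by_eps:
  fixes u :: "nat \<Rightarrow> real"
  assumes "\<And>e. e > 0 \<Longrightarrow> \<exists>M. \<forall>N\<ge>M. u N \<le> e" "\<And>N. 0 \<le> u N"
  shows "u \<longlonglongrightarrow> 0"
  unfolding LIMSEQ_iff
proof (intro allI impI)
  fix r :: real assume "r > 0"
  then obtain M where "\<forall>N\<ge>M. u N \<le> r / 2" using assms(1)[of "r/2"] by auto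
  then show "\<exists>no. \<forall>n\<ge>no. norm (u n - 0) < r"
  proof (intro exI allI impI)
    fix n assume "n \<ge> M"
    then have "u n \<le> r / 2" using \<open>\<forall>N\<ge>M. u N \<le> r / 2\<close> by blast
    then show "norm (u n - 0) < r" using assms(2)[of n] \<open>r > 0\<close> by simp
  qed
qed

lemma avlim_mult_bounded:
  assumes h1: "avlim X L" and h2: "avlim Y M" and bd: "\<And>n. av (Y n) \<le> B"
  shows "avlim (\<lambda>n. X n * Y n) (L * M)"
  unfolding avlim_def
proof (rule sandwich0)
  fix n
  have eq: "X n * Y n - L * M = (X n - L) * Y n + L * (Y n - M)" by (simp add: algebra_simps)
  have "av (X n * Y n - L * M) \<le> av ((X n - L) * Y n) + av (L * (Y n - M))"
    unfolding eq by (rule av_triangle)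
  also have "\<dots> \<le> av (X n - L) * B + av L * av (Y n - M)"
    by (simp add: av_mult bd mult_left_mono)
  finally show "av (X n * Y n - L * M) \<le> av (X n - L) * B + av L * av (Y n - M)" .
next
  show "(\<lambda>n. av (X n - L) * B + av L * av (Y n - M)) \<longlonglongrightarrow> 0"
    using tendsto_add[OF tendsto_mult_right[OF h1[unfolded avlim_def], of B]
        tendsto_mult_left[OF h2[unfolded avlim_def], of "av L"]] by simp
qed simp

definition ser :: "(nat \<Rightarrow> 'a) \<Rightarrow> 'a \<Rightarrow> nat \<Rightarrow> 'a" where
  "ser c z N = (\<Sum>n<N. c n * z ^ n)"

definition has_ser :: "(nat \<Rightarrow> 'a) \<Rightarrow> ('a \<Rightarrow> 'a) \<Rightarrow> bool" where
  "has_ser c g \<longleftrightarrow> (\<forall>z. avlim (ser c z) (g z))"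

lemma entire_iff: "av_entire av g \<longleftrightarrow> (\<exists>c. has_ser c g)"
  unfolding av_entire_def has_ser_def avlim_def ser_def ..

lemma has_ser_unique: "has_ser c g \<Longrightarrow> has_ser c h \<Longrightarrow> g = h"
  unfolding has_ser_def using avlim_unique by blast

lemma has_ser_terms:
  assumes "has_ser c g" shows "(\<lambda>n. av (c n * z ^ n)) \<longlonglongrightarrow> 0"
proof (rule sandwich0)
  have h: "(\<lambda>n. av (ser c z n - g z)) \<longlonglongrightarrow> 0" using assms unfolding has_ser_def avlim_def by blast
  fix n
  have eq: "c n * z ^ n = (ser c z (Suc n) - g z) + (- (ser c z n - g z))"
    by (simp add: ser_def)
  show "av (c n * z ^ n) \<le> av (ser c z (Suc n) - g z) + av (ser c z n - g z)"
    unfolding eq using av_triangle[of "ser c z (Suc n) - g z" "- (ser c z n - g z)"] by (simp only: av_minus)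
next
  have h: "(\<lambda>n. av (ser c z n - g z)) \<longlonglongrightarrow> 0" using assms unfolding has_ser_def avlim_def by blast
  show "(\<lambda>n. av (ser c z (Suc n) - g z) + av (ser c z n - g z)) \<longlonglongrightarrow> 0"
    using tendsto_add[OF LIMSEQ_Suc[OF h] h] by simp
qed simp

lemma has_ser_add:
  "has_ser c g \<Longrightarrow> has_ser d h \<Longrightarrow> has_ser (\<lambda>n. c n + d n) (\<lambda>z. g z + h z)"
  unfolding has_ser_def
proof (intro allI)
  fix z assume "\<forall>z. avlim (ser c z) (g z)" "\<forall>z. avlim (ser d z) (h z)"
  then have "avlim (\<lambda>N. ser c z N + ser d z N) (g z + h z)" using avlim_add by blast
  moreover have "(\<lambda>N. ser c z N + ser d z N) = ser (\<lambda>n. c n + d n) z"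
    by (simp add: fun_eq_iff ser_def sum.distrib distrib_right)
  ultimately show "avlim (ser (\<lambda>n. c n + d n) z) (g z + h z)" by simp
qed

lemma has_ser_cmult:
  "has_ser c g \<Longrightarrow> has_ser (\<lambda>n. k * c n) (\<lambda>z. k * g z)"
  unfolding has_ser_def
proof (intro allI)
  fix z assume "\<forall>z. avlim (ser c z) (g z)"
  then have "avlim (\<lambda>N. k * ser c z N) (k * g z)" using avlim_cmult by blast
  moreover have "(\<lambda>N. k * ser c z N) = ser (\<lambda>n. k * c n) z"
    by (simp add: fun_eq_iff ser_def sum_distrib_left mult.assoc)
  ultimately show "avlim (ser (\<lambda>n. k * c n) z) (k * g z)" by simp
qed

lemma has_ser_const: "has_ser (\<lambda>n. if n = 0 then k else 0) (\<lambda>z. k)"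
  unfolding has_ser_def
proof (intro allI)
  fix z
  have "ser (\<lambda>n. if n = 0 then k else 0) z N = k" if "N \<ge> 1" for N
  proof -
    have "ser (\<lambda>n. if n = 0 then k else 0) z N = (\<Sum>n<N. if n = 0 then k else 0)"
      unfolding ser_def by (rule sum.cong) auto
    also have "\<dots> = k" using that by (simp add: sum.delta)
    finally show ?thesis .
  qed
  then show "avlim (ser (\<lambda>n. if n = 0 then k else 0) z) k" by (rule avlim_eventually_const)
qed

lemma has_ser_at0: "has_ser c g \<Longrightarrow> g 0 = c 0"
proof -
  assume h: "has_ser c g"
  have "ser c 0 N = c 0" if "N \<ge> 1" for N
  proof -
    have "ser c 0 N = (\<Sum>n<N. if n = 0 then c 0 else 0)"
      unfolding ser_def by (rule sum.cong) auto
    also have "\<dots> = c 0" using that by (simp add: sum.delta)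
    finally show ?thesis .
  qed
  then have "avlim (ser c 0) (c 0)" by (rule avlim_eventually_const)
  moreover have "avlim (ser c 0) (g 0)" using h unfolding has_ser_def by blast
  ultimately show ?thesis using avlim_unique by blast
qed

lemma has_ser_scale: "has_ser c g \<Longrightarrow> has_ser (\<lambda>n. c n * x ^ n) (\<lambda>u. g (x * u))"
  unfolding has_ser_def
proof (intro allI)
  fix u assume "\<forall>z. avlim (ser c z) (g z)"
  then have "avlim (ser c (x * u)) (g (x * u))" by blast
  moreover have "ser c (x * u) = ser (\<lambda>n. c n * x ^ n) u"
    by (simp add: fun_eq_iff ser_def power_mult_distrib mult.assoc)
  ultimately show "avlim (ser (\<lambda>n. c n * x ^ n) u) (g (x * u))" by simp
qed

lemma has_ser_constcoef:
  assumes "has_ser c g" "\<And>k. k \<ge> 1 \<Longrightarrow> c k = 0" shows "g z = c 0"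
proof -
  have "ser c z N = c 0" if "N \<ge> 1" for N
  proof -
    have "ser c z N = (\<Sum>n<N. if n = 0 then c 0 else 0)"
      unfolding ser_def by (rule sum.cong) (use assms(2) in auto)
    also have "\<dots> = c 0" using that by (simp add: sum.delta)
    finally show ?thesis .
  qed
  then have "avlim (ser c z) (c 0)" by (rule avlim_eventually_const)
  moreover have "avlim (ser c z) (g z)" using assms unfolding has_ser_def by blast
  ultimately show ?thesis using avlim_unique by blast
qed

end

context naf
begin

lemma has_ser_mult:
  assumes hc: "has_ser c g" and hd: "has_ser d h"
  shows "has_ser (\<lambda>n. \<Sum>i\<le>n. c i * d (n - i)) (\<lambda>z. g z * h z)"
  unfolding has_ser_def
proof (intro allI)
  fix z
  define p where "p = (\<lambda>n. \<Sum>i\<le>n. c i * d (n - i))"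
  define a where "a = (\<lambda>i. c i * z ^ i)"
  define b where "b = (\<lambda>i. d i * z ^ i)"
  have ta: "(\<lambda>i. av (a i)) \<longlonglongrightarrow> 0" unfolding a_def by (rule has_ser_terms[OF hc])
  have tb: "(\<lambda>i. av (b i)) \<longlonglongrightarrow> 0" unfolding b_def by (rule has_ser_terms[OF hd])
  obtain Ba where Ba: "Ba > 0" "\<And>i. av (a i) \<le> Ba" using conv0_bounded[OF ta] by blast
  obtain Bb where Bb: "Bb > 0" "\<And>i. av (b i) \<le> Bb" using conv0_bounded[OF tb] by blast
  have Sa: "ser c z N = (\<Sum>i<N. a i)" for N unfolding ser_def a_def ..
  have Sb: "ser d z N = (\<Sum>i<N. b i)" for N unfolding ser_def b_def ..
  have avSb: "av (ser d z N) \<le> Bb" for N unfolding Sb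
    by (rule av_sum_le) (use Bb in auto)
  have P: "avlim (\<lambda>N. ser c z N * ser d z N) (g z * h z)"
    by (rule avlim_mult_bounded[OF _ _ avSb]) (use hc hd in \<open>auto simp: has_ser_def\<close>)
  define D where "D = (\<lambda>N. ser c z N * ser d z N - ser p z N)"
  have Deq: "D N = (\<Sum>(i,j) \<in> ({..<N} \<times> {..<N}) - {(i,j). i + j < N}. a i * b j)" for N
  proof -
    have "ser p z N = (\<Sum>n<N. \<Sum>i\<le>n. a i * b (n - i))"
      unfolding ser_def p_def a_def b_def sum_distrib_right
    proof (intro sum.cong refl)
      fix n i :: nat assume "i \<in> {..n}"
      then have "z ^ n = z ^ i * z ^ (n - i)" by (simp add: power_add[symmetric])
      then show "c i * d (n - i) * z ^ n = c i * z ^ i * (d (n - i) * z ^ (n - i))"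
        by (simp add: algebra_simps)
    qed
    also have "\<dots> = (\<Sum>(i,j)\<in>{(i,j). i + j < N}. a i * b j)"
      by (rule sum.triangle_reindex[symmetric])
    finally have e1: "ser p z N = (\<Sum>(i,j)\<in>{(i,j). i + j < N}. a i * b j)" .
    have e2: "ser c z N * ser d z N = (\<Sum>(i,j) \<in> {..<N} \<times> {..<N}. a i * b j)"
      unfolding Sa Sb sum_product sum.cartesian_product ..
    have sub: "{(i,j). i + j < N} \<subseteq> {..<N} \<times> {..<N}" by auto
    have "(\<Sum>(i,j) \<in> {..<N} \<times> {..<N}. a i * b j) =
          (\<Sum>(i,j) \<in> ({..<N} \<times> {..<N}) - {(i,j). i + j < N}. a i * b j) +
          (\<Sum>(i,j)\<in>{(i,j). i + j < N}. a i * b j)"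
      by (rule sum.subset_diff[OF sub]) simp
    then show ?thesis unfolding D_def e1 e2 by simp
  qed
  have Dsmall: "\<exists>M. \<forall>N\<ge>M. av (D N) \<le> e" if "e > 0" for e
  proof -
    obtain Ma where Ma: "\<forall>i\<ge>Ma. av (a i) < e / Bb"
      using ta[unfolded LIMSEQ_iff] \<open>e > 0\<close> Bb(1) by (metis abs_of_nonneg av_nonneg diff_zero divide_pos_pos real_norm_def)
    obtain Mb where Mb: "\<forall>i\<ge>Mb. av (b i) < e / Ba"
      using tb[unfolded LIMSEQ_iff] \<open>e > 0\<close> Ba(1) by (metis abs_of_nonneg av_nonneg diff_zero divide_pos_pos real_norm_def)
    have "av (D N) \<le> e" if "N \<ge> Ma + Mb" for N
      unfolding Deq
    proof (rule av_sum_le)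
      fix x assume "x \<in> {..<N} \<times> {..<N} - {(i, j). i + j < N}"
      then obtain i j where x: "x = (i, j)" "i + j \<ge> N" by auto
      then have "i \<ge> Ma \<or> j \<ge> Mb" using that by linarith
      then have "av (a i) * av (b j) \<le> e"
      proof
        assume "i \<ge> Ma"
        then have "av (a i) * av (b j) \<le> (e / Bb) * Bb"
          using Ma Bb \<open>e > 0\<close> by (intro mult_mono) (auto simp: less_imp_le)
        then show ?thesis using Bb(1) by simp
      next
        assume "j \<ge> Mb"
        then have "av (a i) * av (b j) \<le> Ba * (e / Ba)"
          using Mb Ba \<open>e > 0\<close> by (intro mult_mono) (auto simp: less_imp_le)
        then show ?thesis using Ba(1) by simp
      qed
      then show "av (case x of (i, j) \<Rightarrow> a i * b j) \<le> e" using x by (simp add: av_mult)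
    qed (use \<open>e > 0\<close> in simp)
    then show ?thesis by blast
  qed
  have D0: "(\<lambda>N. av (D N)) \<longlonglongrightarrow> 0" by (rule tendsto0_by_eps[OF Dsmall]) simp_all
  show "avlim (ser (\<lambda>n. \<Sum>i\<le>n. c i * d (n - i)) z) (g z * h z)"
    unfolding p_def[symmetric] avlim_def
  proof (rule sandwich0)
    fix N
    have eq: "ser p z N - g z * h z = (ser c z N * ser d z N - g z * h z) + (- D N)"
      unfolding D_def by simp
    show "av (ser p z N - g z * h z) \<le> av (ser c z N * ser d z N - g z * h z) + av (D N)"
      unfolding eq using av_triangle[of "ser c z N * ser d z N - g z * h z" "- D N"] by (simp only: av_minus)
  next
    show "(\<lambda>N. av (ser c z N * ser d z N - g z * h z) + av (D N)) \<longlonglongrightarrow> 0"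
      using tendsto_add[OF P[unfolded avlim_def] D0] by simp
  qed simp
qed

end

locale nac = naf +
  assumes ac: "algebraically_closed TYPE('a)"
      and cpl: "av_complete av"
begin

lemma ac_root: "degree (p :: 'a poly) > 0 \<Longrightarrow> \<exists>x. poly p x = 0"
  using ac unfolding algebraically_closed_def by blast

lemma kth_root: assumes "k \<ge> 1" shows "\<exists>y::'a. y ^ k = b"
proof -
  let ?p = "monom (1::'a) k + [:-b:]"
  have "degree ?p = k"
    by (subst degree_add_eq_left) (use assms in \<open>auto simp: degree_monom_eq\<close>)
  then obtain y where "poly ?p y = 0" using ac_root[of ?p] assms by auto
  then show ?thesis by (auto simp: poly_monom)
qed

lemma coeff_lin_mult: "coeff ([:b, 1:] * (r :: 'a poly)) k = b * coeff r k + (case k of 0 \<Rightarrow> 0 | Suc j \<Rightarrow> coeff r j)"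
  by (cases k) simp_all

lemma no_root_dominant:
  assumes "(p :: 'a poly) \<noteq> 0" "\<And>u. av u \<le> 1 \<Longrightarrow> poly p u \<noteq> 0"
  shows "\<forall>n\<ge>1. av (coeff p n) < av (coeff p 0)"
  using assms
proof (induction "degree p" arbitrary: p rule: less_induct)
  case less
  have c0: "coeff p 0 \<noteq> 0" using less.prems(2)[of 0] by (simp add: poly_0_coeff_0)
  show ?case
  proof (intro allI impI)
  fix n :: nat assume n1: "n \<ge> 1"
  show "av (coeff p n) < av (coeff p 0)"
  proof (cases "degree p = 0")
    case True
    then have "coeff p n = 0" using n1 by (intro coeff_eq_0) simp
    then show ?thesis using c0 av_pos by simp
  next
    case False
    then obtain z where z: "poly p z = 0" using ac_root by blast
    then have az: "av z > 1" using less.prems(2) by force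
    from z obtain q where pq: "p = [:-z, 1:] * q" using poly_eq_0_iff_dvd by (metis dvdE)
    have q0: "q \<noteq> 0" using pq less.prems(1) by auto
    have "degree p = degree [:-z, 1:] + degree q" unfolding pq
      by (rule degree_mult_eq) (use q0 in auto)
    then have dq: "degree q < degree p" by simp
    have qroot: "poly q u \<noteq> 0" if "av u \<le> 1" for u
      using less.prems(2)[OF that] pq by simp
    have IH: "\<And>m. m \<ge> 1 \<Longrightarrow> av (coeff q m) < av (coeff q 0)"
      using less.hyps[OF dq q0 qroot] by blast
    have cq0: "coeff q 0 \<noteq> 0" using qroot[of 0] by (simp add: poly_0_coeff_0)
    have "coeff p 0 = -z * coeff q 0" unfolding pq coeff_lin_mult by simp
    then have ap0: "av (coeff p 0) = av z * av (coeff q 0)" by (simp add: av_mult)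
    obtain m where n: "n = Suc m" using n1 by (cases n) auto
    have "coeff p n = -z * coeff q n + coeff q m" unfolding pq coeff_lin_mult n by simp
    then have "av (coeff p n) \<le> max (av z * av (coeff q n)) (av (coeff q m))"
      using av_ultra[of "-z * coeff q n" "coeff q m"] by (simp add: av_mult)
    moreover have "av z * av (coeff q n) < av z * av (coeff q 0)"
      using IH[OF n1] az by simp
    moreover have "av (coeff q m) < av z * av (coeff q 0)"
    proof -
      have "av (coeff q m) \<le> av (coeff q 0)" using IH[of m] by (cases m) auto
      also have "\<dots> < av z * av (coeff q 0)" using az av_pos[OF cq0] by simp
      finally show ?thesis .
    qed
    ultimately show ?thesis using ap0 by linarith
  qed
  qed
qed

lemma root_in_disk:
  assumes "n \<ge> 1" "coeff p n \<noteq> 0" "av (coeff p 0) \<le> av (coeff p n)"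
  shows "\<exists>u. av u \<le> 1 \<and> poly p u = 0"
proof (rule ccontr)
  assume "\<not> ?thesis"
  then have "\<And>u. av u \<le> 1 \<Longrightarrow> poly p u \<noteq> 0" by blast
  moreover have "p \<noteq> 0" using assms(2) by auto
  ultimately have "av (coeff p n) < av (coeff p 0)" using no_root_dominant assms(1) by blast
  then show False using assms(3) by simp
qed

lemma pcomp_tail_bound:
  assumes "av b \<le> 1" "0 \<le> B"
  shows "(\<forall>k\<ge>m. av (coeff p k) \<le> B) \<Longrightarrow> (\<forall>k\<ge>m. av (coeff (pcompose p [:b, 1:]) k) \<le> B)"
proof (induction p arbitrary: m)
  case 0
  then show ?case using assms by simp
next
  case (pCons a p)
  define r where "r = pcompose p [:b, 1:]"
  have hp: "\<forall>k\<ge>m - 1. av (coeff p k) \<le> B"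
  proof (intro allI impI)
    fix k assume "k \<ge> m - 1"
    then have "Suc k \<ge> m" by simp
    then show "av (coeff p k) \<le> B" using pCons.prems by force
  qed
  have hr: "\<forall>k\<ge>m - 1. av (coeff r k) \<le> B" unfolding r_def by (rule pCons.IH[OF hp])
  show ?case
  proof (intro allI impI)
    fix k assume km: "k \<ge> m"
    have eq: "coeff (pcompose (pCons a p) [:b, 1:]) k =
          (if k = 0 then a else 0) + (b * coeff r k + (case k of 0 \<Rightarrow> 0 | Suc j \<Rightarrow> coeff r j))"
      unfolding pcompose_pCons coeff_add r_def[symmetric] coeff_lin_mult by (cases k) simp_all
    have brk: "av (b * coeff r k) \<le> B"
    proof -
      have "av (b * coeff r k) = av b * av (coeff r k)" by (rule av_mult)
      also have "\<dots> \<le> 1 * B" using hr km assms by (intro mult_mono) auto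
      finally show ?thesis by simp
    qed
    show "av (coeff (pcompose (pCons a p) [:b, 1:]) k) \<le> B"
    proof (cases k)
      case 0
      then have "av (coeff (pCons a p) 0) \<le> B" using pCons.prems km by blast
      then have "av a \<le> B" by simp
      then show ?thesis unfolding eq using brk 0 by (simp add: av_add_le)
    next
      case (Suc j)
      then have "av (coeff r j) \<le> B" using hr km by auto
      then show ?thesis unfolding eq using brk Suc by (simp add: av_add_le)
    qed
  qed
qed

definition tp :: "(nat \<Rightarrow> 'a) \<Rightarrow> nat \<Rightarrow> 'a poly" where
  "tp d M = (\<Sum>n<M. monom (d n) n)"

lemma coeff_tp: "coeff (tp d M) k = (if k < M then d k else 0)"
  unfolding tp_def coeff_sum coeff_monom by (simp add: sum.delta)

lemma poly_tp: "poly (tp d M) u = ser d u M"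
  unfolding tp_def poly_sum poly_monom ser_def ..

end

context nac
begin

lemma coeff_pcomp_scale: "coeff (pcompose (p :: 'a poly) [:0, s:]) k = coeff p k * s ^ k"
proof (induction p arbitrary: k)
  case 0
  then show ?case by simp
next
  case (pCons a p)
  show ?case
    by (cases k) (simp_all add: pcompose_pCons pCons.IH algebra_simps)
qed

lemma finite_max_less:
  fixes F :: "real set"
  assumes "finite F" "\<And>x. x \<in> F \<Longrightarrow> x < 1"
  shows "\<exists>B. 0 \<le> B \<and> B < 1 \<and> (\<forall>x\<in>F. x \<le> B)"
proof -
  let ?B = "Max (insert 0 F)"
  have "?B \<in> insert 0 F" using assms(1) by (intro Max_in) auto
  then have "?B < 1" using assms(2) by auto
  moreover have "\<forall>x\<in>F. x \<le> ?B" using assms(1) by auto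
  moreover have "0 \<le> ?B" using assms(1) by auto
  ultimately show ?thesis by blast
qed

lemma approx_step:
  assumes bd: "\<And>n. av (d n) \<le> 1"
    and dN: "av (d N) = 1" and N1: "N \<ge> 1" and tail: "\<And>n. n > N \<Longrightarrow> av (d n) < 1"
    and MN: "M > N" and w1: "av w \<le> 1" and root: "poly (tp d M) w = 0"
  shows "\<exists>w'. av w' \<le> 1 \<and> poly (tp d (Suc M)) w' = 0 \<and> av (w' - w) ^ N \<le> av (d M)"
proof -
  define P where "P = tp d (Suc M)"
  define eps where "eps = poly P w"
  have "eps = poly (tp d M) w + d M * w ^ M"
    unfolding eps_def P_def poly_tp ser_def by simp
  then have eps: "eps = d M * w ^ M" using root by simp
  have aeps: "av eps \<le> av (d M)"
  proof -
    have "av eps = av (d M) * av w ^ M" by (simp add: eps av_mult av_power)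
    also have "\<dots> \<le> av (d M) * 1" using w1 by (intro mult_left_mono power_le_one) auto
    finally show ?thesis by simp
  qed
  have aeps1: "av eps < 1" using aeps tail[OF MN] by linarith
  show ?thesis
  proof (cases "eps = 0")
    case True
    then show ?thesis using w1 N1 av_nonneg[of "d M"] unfolding eps_def P_def
      by (intro exI[of _ w]) (simp add: power_0_left)
  next
    case False
    define E where "E = pcompose P [:w, 1:]"
    have E0: "coeff E 0 = eps"
      unfolding E_def eps_def by (simp add: poly_0_coeff_0[symmetric] poly_pcompose)
    have "\<exists>m. 1 \<le> m \<and> m \<le> N \<and> \<not> av (coeff E m) < 1"
    proof (rule ccontr)
      assume "\<not> ?thesis"
      then have low: "\<And>m. m \<le> N \<Longrightarrow> av (coeff E m) < 1"
        using E0 aeps1 by (metis less_one not_le)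
      obtain B1 where B1: "0 \<le> B1" "B1 < 1" "\<forall>x\<in>(\<lambda>n. av (d n)) ` {Suc N..<Suc M}. x \<le> B1"
      proof -
        have "\<And>x. x \<in> (\<lambda>n. av (d n)) ` {Suc N..<Suc M} \<Longrightarrow> x < 1" using tail by auto
        then show ?thesis using that finite_max_less[of "(\<lambda>n. av (d n)) ` {Suc N..<Suc M}"] by auto
      qed
      have tP: "\<forall>k\<ge>Suc N. av (coeff P k) \<le> B1"
        unfolding P_def coeff_tp using B1 by auto
      have tE: "\<forall>k\<ge>Suc N. av (coeff E k) \<le> B1"
        unfolding E_def by (rule pcomp_tail_bound[OF w1 B1(1) tP])
      obtain B2 where B2: "0 \<le> B2" "B2 < 1" "\<forall>x\<in>insert B1 ((\<lambda>m. av (coeff E m)) ` {..N}). x \<le> B2"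
        using finite_max_less[of "insert B1 ((\<lambda>m. av (coeff E m)) ` {..N})"] low B1(2) by auto
      have allE: "\<forall>k\<ge>0. av (coeff E k) \<le> B2"
      proof (intro allI impI)
        fix k :: nat
        show "av (coeff E k) \<le> B2"
        proof (cases "k \<le> N")
          case True then show ?thesis using B2 by auto
        next
          case False then show ?thesis using tE B2 by (metis insertI1 not_less_eq_eq order.trans)
        qed
      qed
      have aw: "av (-w) \<le> 1" using w1 by simp
      have "pcompose E [:-w, 1:] = P"
        unfolding E_def pcompose_assoc[symmetric] by (simp add: pcompose_pCons)
      then have "av (coeff P N) \<le> B2" using pcomp_tail_bound[OF aw B2(1) allE] by auto
      moreover have "coeff P N = d N" unfolding P_def coeff_tp using MN by simp
      ultimately show False using dN B2(2) by simp
    qed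
    then obtain m where m: "1 \<le> m" "m \<le> N" "av (coeff E m) \<ge> 1" by force
    obtain s where s: "s ^ m = eps" using kth_root[OF m(1)] by blast
    have as: "av s ^ m = av eps" using s by (simp add: av_power[symmetric])
    have as1: "av s \<le> 1"
    proof (rule ccontr)
      assume "\<not> av s \<le> 1"
      then have "1 \<le> av s ^ m" by (intro one_le_power) simp
      then show False using as aeps1 by simp
    qed
    define R where "R = pcompose E [:0, s:]"
    have R0: "coeff R 0 = eps" unfolding R_def coeff_pcomp_scale E0 by simp
    have Rm: "coeff R m = coeff E m * eps" unfolding R_def coeff_pcomp_scale s ..
    have aRm: "av (coeff R m) \<ge> av eps"
    proof -
      have "1 * av eps \<le> av (coeff E m) * av eps" using m(3) by (intro mult_right_mono) auto
      then show ?thesis unfolding Rm by (simp add: av_mult)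
    qed
    have "coeff R m \<noteq> 0" using aRm av_pos[OF False] by auto
    then obtain t where t: "av t \<le> 1" "poly R t = 0"
      using root_in_disk[OF m(1)] aRm R0 by auto
    define w' where "w' = w + s * t"
    have "poly P w' = 0" using t(2) unfolding R_def E_def w'_def by (simp add: poly_pcompose algebra_simps)
    moreover have "av w' \<le> 1"
    proof -
      have "av (s * t) \<le> 1" using as1 t(1) by (simp add: av_mult mult_le_one)
      then show ?thesis unfolding w'_def using w1 by (simp add: av_add_le)
    qed
    moreover have "av (w' - w) ^ N \<le> av (d M)"
    proof -
      have "av (w' - w) \<le> av s" unfolding w'_def using t(1) as1 by (simp add: av_mult mult_left_le)
      then have "av (w' - w) ^ N \<le> av s ^ N" by (intro power_mono) auto
      also have "\<dots> \<le> av s ^ m" using as1 m(2) by (intro power_decreasing) auto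
      also have "\<dots> \<le> av (d M)" using as aeps by simp
      finally show ?thesis .
    qed
    ultimately show ?thesis unfolding P_def by blast
  qed
qed

end

primrec iseq :: "'b \<Rightarrow> (nat \<Rightarrow> 'b \<Rightarrow> 'b) \<Rightarrow> nat \<Rightarrow> 'b" where
  "iseq x0 F 0 = x0"
| "iseq x0 F (Suc k) = F k (iseq x0 F k)"

context nac
begin

lemma ser_diff_disk:
  assumes "\<And>n. av (d n) \<le> 1" "av x \<le> 1" "av y \<le> 1"
  shows "av (ser d x M - ser d y M) \<le> av (x - y)"
proof -
  have "ser d x M - ser d y M = (\<Sum>n<M. d n * (x ^ n - y ^ n))"
    unfolding ser_def by (simp add: sum_subtractf algebra_simps)
  also have "av \<dots> \<le> av (x - y)"
  proof (rule av_sum_le)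
    fix n
    have "av (\<Sum>i<n. y ^ (n - Suc i) * x ^ i) \<le> 1"
      by (rule av_sum_le) (use assms in \<open>auto simp: av_mult av_power intro!: mult_le_one power_le_one\<close>)
    then have "av (x ^ n - y ^ n) \<le> av (x - y)"
      unfolding power_diff_sumr2[of x n y] av_mult by (simp add: mult_left_le)
    moreover have "av (d n) * av (x ^ n - y ^ n) \<le> 1 * av (x ^ n - y ^ n)"
      using assms(1)[of n] by (intro mult_right_mono) auto
    ultimately show "av (d n * (x ^ n - y ^ n)) \<le> av (x - y)"
      by (simp add: av_mult)
  qed simp
  finally show ?thesis .
qed

lemma uniform_tail:
  assumes hs: "has_ser d G" and bd: "\<And>n. av (d n) \<le> 1" and td: "(\<lambda>n. av (d n)) \<longlonglongrightarrow> 0"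
    and e: "e > 0"
  shows "\<exists>M0. \<forall>M\<ge>M0. \<forall>x. av x \<le> 1 \<longrightarrow> av (G x - ser d x M) \<le> e"
proof -
  obtain M0 where M0: "\<forall>n\<ge>M0. av (d n) < e"
    using td[unfolded LIMSEQ_iff] e by force
  have "av (G x - ser d x M) \<le> e" if "M \<ge> M0" "av x \<le> 1" for M x
  proof -
    have lim: "(\<lambda>M'. av (ser d x M' - G x) + e) \<longlonglongrightarrow> 0 + e"
      using hs unfolding has_ser_def avlim_def by (intro tendsto_add) auto
    have "av (G x - ser d x M) \<le> av (ser d x M' - G x) + e" if "M' \<ge> M" for M'
    proof -
      have eq: "ser d x M' - ser d x M = (\<Sum>n\<in>{..<M'} - {..<M}. d n * x ^ n)"
        unfolding ser_def using that by (subst sum_diff) auto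
      have b: "av (ser d x M' - ser d x M) \<le> e" unfolding eq
      proof (rule av_sum_le)
        fix n assume "n \<in> {..<M'} - {..<M}"
        then have "n \<ge> M0" using \<open>M \<ge> M0\<close> by auto
        then have "av (d n) \<le> e" using M0 by auto
        moreover have "av x ^ n \<le> 1" using \<open>av x \<le> 1\<close> by (intro power_le_one) auto
        moreover have "av (d n) * av x ^ n \<le> av (d n) * 1"
          using \<open>av x ^ n \<le> 1\<close> by (intro mult_left_mono) auto
        ultimately show "av (d n * x ^ n) \<le> e"
          by (simp add: av_mult av_power)
      qed (use e in simp)
      have "G x - ser d x M = (-(ser d x M' - G x)) + (ser d x M' - ser d x M)" by simp
      then have "av (G x - ser d x M) \<le> av (ser d x M' - G x) + av (ser d x M' - ser d x M)"
        using av_triangle[of "-(ser d x M' - G x)" "ser d x M' - ser d x M"] by (simp only: av_minus)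
      then show ?thesis using b by linarith
    qed
    then show ?thesis using LIMSEQ_le_const[OF lim] by auto
  qed
  then show ?thesis by blast
qed

lemma core_zero:
  assumes hs: "has_ser d G" and bd: "\<And>n. av (d n) \<le> 1" and N0: "N0 \<ge> 1" "av (d N0) = 1"
  shows "\<exists>w. G w = 0"
proof -
  have td: "(\<lambda>n. av (d n)) \<longlonglongrightarrow> 0" using has_ser_terms[OF hs, of 1] by simp
  obtain K where K: "\<forall>n\<ge>K. av (d n) < 1" using td[unfolded LIMSEQ_iff, rule_format, of 1] by force
  define S where "S = {n. av (d n) = 1}"
  have "S \<subseteq> {..<K}"
  proof
    fix n assume "n \<in> S"
    then have "av (d n) = 1" unfolding S_def by simp
    then show "n \<in> {..<K}" using K by (metis lessThan_iff less_irrefl not_le)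
  qed
  then have finS: "finite S" by (rule finite_subset) simp
  define N where "N = Max S"
  have "N0 \<in> S" using N0 unfolding S_def by simp
  then have NS: "N \<in> S" and NN0: "N0 \<le> N" using finS unfolding N_def by (auto intro: Max_in)
  have N1: "N \<ge> 1" using NN0 N0 by simp
  have dN: "av (d N) = 1" using NS unfolding S_def by simp
  have tail: "av (d n) < 1" if "n > N" for n
  proof -
    have "n \<notin> S" using that finS unfolding N_def using Max_ge not_le by blast
    then show ?thesis using bd[of n] unfolding S_def by simp
  qed
  have step: "\<exists>w'. av w' \<le> 1 \<and> poly (tp d (Suc M)) w' = 0 \<and> av (w' - w) ^ N \<le> av (d M)"
    if "M > N" "av w \<le> 1" "poly (tp d M) w = 0" for M w
    using approx_step[OF bd dN N1 tail that] by blast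
  define nxt where "nxt = (\<lambda>M w. SOME w'. av w' \<le> 1 \<and> poly (tp d (Suc M)) w' = 0 \<and> av (w' - w) ^ N \<le> av (d M))"
  have nxt: "av (nxt M w) \<le> 1 \<and> poly (tp d (Suc M)) (nxt M w) = 0 \<and> av (nxt M w - w) ^ N \<le> av (d M)"
    if "M > N" "av w \<le> 1" "poly (tp d M) w = 0" for M w
    unfolding nxt_def by (rule someI_ex[OF step[OF that]])
  obtain u0 where u0: "av u0 \<le> 1" "poly (tp d (Suc N)) u0 = 0"
  proof -
    have "coeff (tp d (Suc N)) N \<noteq> 0" using dN by (auto simp: coeff_tp)
    moreover have "av (coeff (tp d (Suc N)) 0) \<le> av (coeff (tp d (Suc N)) N)"
      using bd[of 0] dN by (simp add: coeff_tp)
    ultimately show ?thesis using root_in_disk[OF N1] that by blast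
  qed
  define u where "u = iseq u0 (\<lambda>k w. nxt (Suc N + k) w)"
  have inv: "av (u k) \<le> 1 \<and> poly (tp d (Suc N + k)) (u k) = 0" for k
  proof (induction k)
    case 0 then show ?case using u0 unfolding u_def by simp
  next
    case (Suc k)
    then show ?case using nxt[of "Suc N + k" "u k"] unfolding u_def by simp
  qed
  have stp: "av (u (Suc k) - u k) ^ N \<le> av (d (Suc N + k))" for k
    using nxt[of "Suc N + k" "u k"] inv[of k] unfolding u_def by simp
  define dl where "dl = (\<lambda>k. av (u (Suc k) - u k))"
  have dl0: "dl \<longlonglongrightarrow> 0"
  proof (rule sandwich0)
    fix k
    show "0 \<le> dl k" unfolding dl_def by simp
    have "dl k = root N (dl k ^ N)" using N1 unfolding dl_def by (simp add: real_root_power_cancel)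
    also have "\<dots> \<le> root N (av (d (Suc N + k)))" using N1 stp[of k] unfolding dl_def
      by (intro real_root_le_mono) auto
    finally show "dl k \<le> root N (av (d (Suc N + k)))" .
  next
    have "(\<lambda>k. av (d (k + Suc N))) \<longlonglongrightarrow> 0" by (rule LIMSEQ_ignore_initial_segment[OF td])
    then have "(\<lambda>k. root N (av (d (k + Suc N)))) \<longlonglongrightarrow> root N 0" by (intro tendsto_real_root)
    then show "(\<lambda>k. root N (av (d (Suc N + k)))) \<longlonglongrightarrow> 0" by (simp add: add.commute)
  qed
  have cauchy: "\<forall>e>0. \<exists>K. \<forall>m\<ge>K. \<forall>n\<ge>K. av (u m - u n) < e"
  proof (intro allI impI)
    fix e :: real assume e: "e > 0"
    obtain K where K: "\<forall>k\<ge>K. dl k < e" using dl0[unfolded LIMSEQ_iff] e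
      by (metis abs_of_nonneg av_nonneg diff_zero dl_def real_norm_def)
    have less: "av (u m - u n) < e" if "K \<le> n" "n \<le> m" for m n
    proof -
      have "u m - u n = (\<Sum>i = n..<m. u (Suc i) - u i)" using sum_Suc_diff'[OF that(2), of u] by simp
      also have "av \<dots> < e"
        by (rule av_sum_less) (use K that e in \<open>auto simp: dl_def\<close>)
      finally show ?thesis .
    qed
    show "\<exists>K. \<forall>m\<ge>K. \<forall>n\<ge>K. av (u m - u n) < e"
    proof (intro exI allI impI)
      fix m n assume "m \<ge> K" "n \<ge> K"
      then show "av (u m - u n) < e"
        using less[of n m] less[of m n] av_sym[of "u m" "u n"] by (cases "n \<le> m") auto
    qed
  qed
  obtain L where L: "(\<lambda>n. av (u n - L)) \<longlonglongrightarrow> 0"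
    using cpl cauchy unfolding av_complete_def by blast
  have L1: "av L \<le> 1"
  proof -
    obtain k where "av (u k - L) < 1" using L[unfolded LIMSEQ_iff, rule_format, of 1] by force
    moreover have "L = u k - (u k - L)" by simp
    ultimately show ?thesis using inv[of k] av_diff_le[of "u k" 1 "u k - L"] by simp
  qed
  have small: "av (G L) \<le> e" if e: "e > 0" for e
  proof -
    obtain M0 where M0: "\<forall>M\<ge>M0. \<forall>x. av x \<le> 1 \<longrightarrow> av (G x - ser d x M) \<le> e"
      using uniform_tail[OF hs bd td e] by blast
    obtain K1 where K1: "\<forall>k\<ge>K1. av (u k - L) < e" using L[unfolded LIMSEQ_iff] e
      by (metis abs_of_nonneg av_nonneg diff_zero real_norm_def)
    define k where "k = K1 + M0"
    define Mk where "Mk = Suc N + k"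
    have r: "ser d (u k) Mk = 0" using inv[of k] unfolding Mk_def by (simp add: poly_tp)
    have "G L = (G L - ser d L Mk) + (ser d L Mk - ser d (u k) Mk)" using r by simp
    moreover have "av (G L - ser d L Mk) \<le> e" using M0 L1 unfolding Mk_def k_def by auto
    moreover have "av (ser d L Mk - ser d (u k) Mk) \<le> e"
    proof -
      have "av (ser d L Mk - ser d (u k) Mk) \<le> av (L - u k)"
        by (rule ser_diff_disk[OF bd L1]) (use inv in blast)
      also have "\<dots> < e" using K1 av_sym[of L "u k"] unfolding k_def by auto
      finally show ?thesis by simp
    qed
    ultimately show ?thesis using av_add_le[of "G L - ser d L Mk" e "ser d L Mk - ser d (u k) Mk"] by simp
  qed
  have "G L = 0"
  proof (rule ccontr)
    assume "G L \<noteq> 0"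
    then have "av (G L) > 0" by (rule av_pos)
    then show False using small[of "av (G L) / 2"] by simp
  qed
  then show ?thesis by blast
qed

end

context nac
begin

lemma entire_zero:
  assumes hs: "has_ser c g" and k: "k \<ge> 1" "c k \<noteq> 0"
  shows "\<exists>w. g w = 0"
proof (cases "c 0 = 0")
  case True
  then show ?thesis using has_ser_at0[OF hs] by auto
next
  case False
  define xr where "xr = (\<lambda>n. SOME y. y ^ n = c 0 / c n)"
  have xr: "xr n ^ n = c 0 / c n" if "n \<ge> 1" for n
    unfolding xr_def by (rule someI_ex) (rule kth_root[OF that])
  have axr: "av (c n) * av (xr n) ^ n = av (c 0)" if "n \<ge> 1" "c n \<noteq> 0" for n
  proof -
    have "c n * xr n ^ n = c 0" using xr[OF that(1)] that(2) by simp
    then show ?thesis by (metis av_mult av_power)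
  qed
  define R where "R = av (xr k)"
  define F where "F = {n. n \<ge> 1 \<and> c n \<noteq> 0 \<and> av (xr n) \<le> R}"
  have tz: "(\<lambda>n. av (c n * xr k ^ n)) \<longlonglongrightarrow> 0" by (rule has_ser_terms[OF hs])
  obtain Kt where Kt: "\<forall>n\<ge>Kt. av (c n * xr k ^ n) < av (c 0)"
    using tz[unfolded LIMSEQ_iff, rule_format, of "av (c 0)"] av_pos[OF False] by force
  have "F \<subseteq> {..<Kt}"
  proof
    fix n assume "n \<in> F"
    then have n: "n \<ge> 1" "c n \<noteq> 0" "av (xr n) \<le> R" unfolding F_def by auto
    have "av (c 0) = av (c n) * av (xr n) ^ n" using axr[OF n(1,2)] by simp
    also have "\<dots> \<le> av (c n) * R ^ n" using n(3) by (intro mult_left_mono power_mono) auto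
    also have "\<dots> = av (c n * xr k ^ n)" unfolding R_def by (simp add: av_mult av_power)
    finally show "n \<in> {..<Kt}" using Kt by (metis lessThan_iff not_le not_less)
  qed
  then have finF: "finite F" by (rule finite_subset) simp
  have kF: "k \<in> F" unfolding F_def R_def using k by simp
  define m where "m = Min ((\<lambda>n. av (xr n)) ` F)"
  have "m \<in> (\<lambda>n. av (xr n)) ` F" unfolding m_def using finF kF by (intro Min_in) auto
  then obtain ks where ks: "ks \<in> F" "av (xr ks) = m" by auto
  have mmin: "m \<le> av (xr n)" if "n \<in> F" for n unfolding m_def using finF that by simp
  define x where "x = xr ks"
  have ks1: "ks \<ge> 1" "c ks \<noteq> 0" using ks(1) unfolding F_def by auto
  have xR: "av x \<le> R" using ks(1) unfolding F_def x_def by simp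
  have bound: "av (c n * x ^ n) \<le> av (c 0)" for n
  proof (cases "n \<ge> 1 \<and> c n \<noteq> 0")
    case True
    have "av x \<le> av (xr n)"
    proof (cases "n \<in> F")
      case True then show ?thesis using mmin ks(2) unfolding x_def by simp
    next
      case False then have "av (xr n) > R" using \<open>n \<ge> 1 \<and> c n \<noteq> 0\<close> unfolding F_def by auto
      then show ?thesis using xR by simp
    qed
    then have "av (c n) * av x ^ n \<le> av (c n) * av (xr n) ^ n"
      by (intro mult_left_mono power_mono) auto
    then show ?thesis using axr True by (simp add: av_mult av_power)
  next
    case False
    then show ?thesis
    proof (cases "n = 0")
      case False
      then have "c n = 0" using \<open>\<not> (n \<ge> 1 \<and> c n \<noteq> 0)\<close> by simp
      then show ?thesis by simp
    qed simp
  qed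
  define d where "d = (\<lambda>n. inverse (c 0) * (c n * x ^ n))"
  have hd: "has_ser d (\<lambda>u. inverse (c 0) * g (x * u))"
    unfolding d_def by (rule has_ser_cmult[OF has_ser_scale[OF hs]])
  have bd: "av (d n) \<le> 1" for n
  proof -
    have "av (d n) = av (c n * x ^ n) / av (c 0)" unfolding d_def by (simp add: av_mult av_inverse divide_inverse mult.commute)
    then show ?thesis using bound[of n] av_pos[OF False] by simp
  qed
  have "c ks * x ^ ks = c 0" unfolding x_def using xr[OF ks1(1)] ks1(2) by simp
  then have dks: "av (d ks) = 1" unfolding d_def using False by simp
  obtain w where "inverse (c 0) * g (x * w) = 0" using core_zero[OF hd bd ks1(1) dks] by blast
  then show ?thesis using False by auto
qed

lemma entire_nonvanishing_const:
  assumes "av_entire av g" "\<And>z. g z \<noteq> 0"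
  shows "g z = g 0"
proof -
  obtain c where hs: "has_ser c g" using assms(1) entire_iff by blast
  have "c k = 0" if "k \<ge> 1" for k
    using entire_zero[OF hs that] assms(2) by blast
  then show ?thesis using has_ser_constcoef[OF hs] by metis
qed

lemma entire_add: "av_entire av g \<Longrightarrow> av_entire av h \<Longrightarrow> av_entire av (\<lambda>z. g z + h z)"
  unfolding entire_iff using has_ser_add by blast
lemma entire_cmult: "av_entire av g \<Longrightarrow> av_entire av (\<lambda>z. k * g z)"
  unfolding entire_iff using has_ser_cmult by blast
lemma entire_const: "av_entire av (\<lambda>z. k)"
  unfolding entire_iff using has_ser_const by blast
lemma entire_mult: "av_entire av g \<Longrightarrow> av_entire av h \<Longrightarrow> av_entire av (\<lambda>z. g z * h z)"
  unfolding entire_iff using has_ser_mult by blast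
lemma entire_minus: "av_entire av g \<Longrightarrow> av_entire av (\<lambda>z. - g z)"
  using entire_cmult[of g "-1"] by simp
lemma entire_diff: "av_entire av g \<Longrightarrow> av_entire av h \<Longrightarrow> av_entire av (\<lambda>z. g z - h z)"
  using entire_add[of g "\<lambda>z. - h z"] entire_minus[of h] by simp

lemma shift_sum:
  assumes "\<And>n. n < k \<Longrightarrow> c n = 0"
  shows "ser c z (N + k) = z ^ k * ser (\<lambda>n. c (n + k)) z N"
proof (induction N)
  case 0
  then show ?case unfolding ser_def using assms by simp
next
  case (Suc N)
  then show ?case unfolding ser_def by (simp add: algebra_simps power_add)
qed

lemma has_ser_shift:
  assumes hs: "has_ser c g" and cz: "\<And>n. n < k \<Longrightarrow> c n = 0"
  shows "has_ser (\<lambda>n. c (n + k)) (\<lambda>z. if z = 0 then c k else g z / z ^ k)"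
  unfolding has_ser_def
proof (intro allI)
  fix z
  show "avlim (ser (\<lambda>n. c (n + k)) z) (if z = 0 then c k else g z / z ^ k)"
  proof (cases "z = 0")
    case True
    have "ser (\<lambda>n. c (n + k)) 0 N = c k" if "N \<ge> 1" for N
    proof -
      have "ser (\<lambda>n. c (n + k)) 0 N = (\<Sum>n<N. if n = 0 then c k else 0)"
        unfolding ser_def by (rule sum.cong) auto
      also have "\<dots> = c k" using that by (simp add: sum.delta)
      finally show ?thesis .
    qed
    then have "avlim (ser (\<lambda>n. c (n + k)) 0) (c k)" by (rule avlim_eventually_const)
    then show ?thesis using True by simp
  next
    case False
    have "avlim (\<lambda>N. ser c z (N + k)) (g z)"
      using hs unfolding has_ser_def by (simp add: avlim_shift)
    then have "avlim (\<lambda>N. inverse (z ^ k) * ser c z (N + k)) (inverse (z ^ k) * g z)"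
      by (rule avlim_cmult)
    moreover have "inverse (z ^ k) * ser c z (N + k) = ser (\<lambda>n. c (n + k)) z N" for N
      using shift_sum[OF cz, where z=z and N=N] False by simp
    ultimately show ?thesis using False by (simp add: divide_inverse mult.commute)
  qed
qed

lemma third_value: "\<exists>t::'a. t \<noteq> 0 \<and> t \<noteq> 1"
proof -
  obtain t :: 'a where "poly [:-1, -1, 1:] t = 0" using ac_root[of "[:-1, -1, 1:]"] by auto
  then have "t * t - t - 1 = 0" by (simp add: algebra_simps)
  then show ?thesis by (intro exI[of _ t]) auto
qed

lemma entire_nonzero_ser:
  assumes hs: "has_ser c g" and "g z \<noteq> 0"
  shows "\<exists>k. c k \<noteq> 0 \<and> (\<forall>n<k. c n = 0)"
proof -
  have "\<exists>n. c n \<noteq> 0"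
  proof (rule ccontr)
    assume h: "\<not> (\<exists>n. c n \<noteq> 0)"
    then have "g z = c 0" using has_ser_constcoef[OF hs] by auto
    then show False using assms(2) h by auto
  qed
  then obtain n where "c n \<noteq> 0" by blast
  then show ?thesis using LeastI[of "\<lambda>n. c n \<noteq> 0" n] not_less_Least[of _ "\<lambda>n. c n \<noteq> 0"] by blast
qed

lemma entire_prod_zero:
  assumes "av_entire av g1" "av_entire av g2" "\<And>z. g1 z * g2 z = 0"
  shows "(\<forall>z. g1 z = 0) \<or> (\<forall>z. g2 z = 0)"
proof (rule ccontr)
  assume "\<not> ?thesis"
  then obtain z1 z2 where z: "g1 z1 \<noteq> 0" "g2 z2 \<noteq> 0" by blast
  obtain c where hc: "has_ser c g1" using assms(1) entire_iff by blast
  obtain d where hd: "has_ser d g2" using assms(2) entire_iff by blast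
  obtain k1 where k1: "c k1 \<noteq> 0" "\<forall>n<k1. c n = 0" using entire_nonzero_ser[OF hc z(1)] by blast
  obtain k2 where k2: "d k2 \<noteq> 0" "\<forall>n<k2. d n = 0" using entire_nonzero_ser[OF hd z(2)] by blast
  define G1 where "G1 = (\<lambda>z. if z = 0 then c k1 else g1 z / z ^ k1)"
  define G2 where "G2 = (\<lambda>z. if z = 0 then d k2 else g2 z / z ^ k2)"
  have e1: "av_entire av G1" unfolding entire_iff G1_def using has_ser_shift[OF hc] k1(2) by blast
  have e2: "av_entire av G2" unfolding entire_iff G2_def using has_ser_shift[OF hd] k2(2) by blast
  define H where "H = (\<lambda>z. G1 z * G2 z)"
  have eH: "av_entire av H" unfolding H_def by (rule entire_mult[OF e1 e2])
  have H0: "H 0 \<noteq> 0" unfolding H_def G1_def G2_def using k1 k2 by simp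
  have Hz: "H z = 0" if "z \<noteq> 0" for z
    unfolding H_def G1_def G2_def using that assms(3)[of z] by auto
  obtain t :: 'a where t: "t \<noteq> 0" "t \<noteq> 1" using third_value by blast
  define w where "w = t * H 0"
  have ew: "av_entire av (\<lambda>z. H z - w)" by (rule entire_diff[OF eH entire_const])
  have nv: "H z - w \<noteq> 0" for z
  proof (cases "z = 0")
    case True then show ?thesis unfolding w_def using H0 t by simp
  next
    case False then show ?thesis unfolding w_def using Hz H0 t by simp
  qed
  have "H 1 - w = H 0 - w" using entire_nonvanishing_const[OF ew nv] by simp
  then show False using Hz[of 1] H0 by simp
qed

end

definition bf :: "(nat \<Rightarrow> nat \<Rightarrow> 'a::field) \<Rightarrow> (nat \<Rightarrow> 'a) \<Rightarrow> (nat \<Rightarrow> 'a) \<Rightarrow> 'a" where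
  "bf q x y = lform (qgrad q x) y"

lemma sum3: "(\<Sum>i<3. f i) = f 0 + f 1 + f (2::nat)"
  by (simp add: numeral_3_eq_3 eval_nat_numeral)

lemma all3: "(\<forall>i<3. P i) \<longleftrightarrow> P 0 \<and> P 1 \<and> P (2::nat)"
  by (auto simp: numeral_3_eq_3 less_Suc_eq eval_nat_numeral)

lemma ex3: "(\<exists>i<3. P i) \<longleftrightarrow> P 0 \<or> P 1 \<or> P (2::nat)"
  by (auto simp: numeral_3_eq_3 less_Suc_eq eval_nat_numeral)

lemma lform_exp: "lform a x = a 0 * x 0 + a 1 * x 1 + a 2 * x 2"
  unfolding lform_def sum3 ..

lemma qform_exp: "qform q x = q 0 0 * x 0 * x 0 + q 0 1 * x 0 * x 1 + q 0 2 * x 0 * x 2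
   + q 1 1 * x 1 * x 1 + q 1 2 * x 1 * x 2 + q 2 2 * x 2 * x 2"
  unfolding qform_def sum3 by simp

lemma qgrad_exp:
  "qgrad q x 0 = 2 * q 0 0 * x 0 + q 0 1 * x 1 + q 0 2 * x 2"
  "qgrad q x 1 = q 0 1 * x 0 + 2 * q 1 1 * x 1 + q 1 2 * x 2"
  "qgrad q x 2 = q 0 2 * x 0 + q 1 2 * x 1 + 2 * q 2 2 * x 2"
  unfolding qgrad_def sum3 by (simp_all add: algebra_simps)

lemma bf_exp: "bf q x y = (2 * q 0 0 * x 0 + q 0 1 * x 1 + q 0 2 * x 2) * y 0
  + (q 0 1 * x 0 + 2 * q 1 1 * x 1 + q 1 2 * x 2) * y 1
  + (q 0 2 * x 0 + q 1 2 * x 1 + 2 * q 2 2 * x 2) * y 2"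
  unfolding bf_def lform_exp qgrad_exp by (simp add: algebra_simps)

lemmas exps = lform_exp qform_exp bf_exp

lemma qform_lin2: "qform q (\<lambda>i. s * x i + t * y i) = s^2 * qform q x + s * t * bf q x y + t^2 * qform q y"
  unfolding exps by (simp add: algebra_simps power2_eq_square)

lemma qform_add: "qform q (\<lambda>i. x i + y i) = qform q x + qform q y + bf q x y"
  unfolding exps by (simp add: algebra_simps)

lemma bf_sym: "bf q x y = bf q y x"
  unfolding exps by (simp add: algebra_simps)

lemma bf_self: "bf q x x = 2 * qform q x"
  unfolding exps by (simp add: algebra_simps)

lemma bf_lin2: "bf q x (\<lambda>i. s * y i + t * w i) = s * bf q x y + t * bf q x w"
  unfolding exps by (simp add: algebra_simps)

lemma bf_lin1: "bf q (\<lambda>i. s * x i + t * y i) w = s * bf q x w + t * bf q y w"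
  unfolding exps by (simp add: algebra_simps)

lemma bf_add2: "bf q x (\<lambda>i. y i + w i) = bf q x y + bf q x w"
  unfolding exps by (simp add: algebra_simps)

lemma lform_lin: "lform a (\<lambda>i. s * x i + t * y i) = s * lform a x + t * lform a y"
  unfolding exps by (simp add: algebra_simps)

lemma lform_diff: "lform a (\<lambda>i. x i - y i) = lform a x - lform a y"
  unfolding exps by (simp add: algebra_simps)

lemma lform_zero: "lform a (\<lambda>i. 0) = 0"
  unfolding exps by simp

lemma lform_cong: "(\<And>i. i < 3 \<Longrightarrow> x i = y i) \<Longrightarrow> lform a x = lform a y"
  unfolding lform_exp by simp
lemma qform_cong: "(\<And>i. i < 3 \<Longrightarrow> x i = y i) \<Longrightarrow> qform q x = qform q y"
  unfolding qform_exp by simp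
lemma bf_cong2: "(\<And>i. i < 3 \<Longrightarrow> x i = y i) \<Longrightarrow> bf q w x = bf q w y"
  unfolding bf_exp by simp

lemma basisW:
  fixes a :: "nat \<Rightarrow> 'a::field"
  assumes "nonzero3 a"
  shows "\<exists>y1 y2 b1 b2. lform a y1 = 0 \<and> lform a y2 = 0 \<and>
     (\<forall>v. lform a v = 0 \<longrightarrow> (\<forall>i<3. v i = lform b1 v * y1 i + lform b2 v * y2 i)) \<and>
     (\<forall>g. lform g y1 = 0 \<and> lform g y2 = 0 \<longrightarrow> proportional3 g a) \<and>
     (\<forall>s t. (\<forall>i<3. s * y1 i + t * y2 i = 0) \<longrightarrow> s = 0 \<and> t = 0)"
proof -
  consider "a 0 \<noteq> 0" | "a 1 \<noteq> 0" | "a 2 \<noteq> 0" using assms unfolding nonzero3_def ex3 by blast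
  then show ?thesis
  proof cases
    case 1
    let ?y1 = "\<lambda>i::nat. if i = 0 then - a 1 else if i = 1 then a 0 else 0"
    let ?y2 = "\<lambda>i::nat. if i = 0 then - a 2 else if i = 2 then a 0 else 0"
    let ?b1 = "\<lambda>i::nat. if i = 1 then 1 / a 0 else 0"
    let ?b2 = "\<lambda>i::nat. if i = 2 then 1 / a 0 else 0"
    show ?thesis
    proof (rule exI[of _ ?y1], rule exI[of _ ?y2], rule exI[of _ ?b1], rule exI[of _ ?b2], intro conjI)
      show "lform a ?y1 = 0" "lform a ?y2 = 0" unfolding lform_exp by (simp_all add: algebra_simps)
    next
      show "\<forall>v. lform a v = 0 \<longrightarrow> (\<forall>i<3. v i = lform ?b1 v * ?y1 i + lform ?b2 v * ?y2 i)"
      proof (rule allI, rule impI)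
      fix v assume "lform a v = 0"
      then show "\<forall>i<3. v i = lform ?b1 v * ?y1 i + lform ?b2 v * ?y2 i"
        using 1 unfolding all3 lform_exp by (simp add: field_simps; algebra)
      qed
    next
      show "\<forall>g. lform g ?y1 = 0 \<and> lform g ?y2 = 0 \<longrightarrow> proportional3 g a"
      proof (intro allI impI)
      fix g assume "lform g ?y1 = 0 \<and> lform g ?y2 = 0"
      then have e: "g 1 * a 0 = g 0 * a 1" "g 2 * a 0 = g 0 * a 2" unfolding lform_exp by (simp_all add: algebra_simps)
      have "g 1 * a 2 = g 2 * a 1"
      proof -
        have "a 0 * (g 1 * a 2) = a 0 * (g 2 * a 1)" using e by algebra
        then show ?thesis using 1 by simp
      qed
      then show "proportional3 g a" unfolding proportional3_def all3 using e by (simp add: algebra_simps)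
      qed
    next
      show "\<forall>s t. (\<forall>i<3. s * ?y1 i + t * ?y2 i = 0) \<longrightarrow> s = 0 \<and> t = 0"
      proof (intro allI impI)
      fix s t assume "\<forall>i<3. s * ?y1 i + t * ?y2 i = 0"
      then show "s = 0 \<and> t = 0" using 1 unfolding all3 by auto
      qed
    qed
  next
    case 2
    let ?y1 = "\<lambda>i::nat. if i = 0 then a 1 else if i = 1 then - a 0 else 0"
    let ?y2 = "\<lambda>i::nat. if i = 1 then - a 2 else if i = 2 then a 1 else 0"
    let ?b1 = "\<lambda>i::nat. if i = 0 then 1 / a 1 else 0"
    let ?b2 = "\<lambda>i::nat. if i = 2 then 1 / a 1 else 0"
    show ?thesis
    proof (rule exI[of _ ?y1], rule exI[of _ ?y2], rule exI[of _ ?b1], rule exI[of _ ?b2], intro conjI)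
      show "lform a ?y1 = 0" "lform a ?y2 = 0" unfolding lform_exp by (simp_all add: algebra_simps)
    next
      show "\<forall>v. lform a v = 0 \<longrightarrow> (\<forall>i<3. v i = lform ?b1 v * ?y1 i + lform ?b2 v * ?y2 i)"
      proof (rule allI, rule impI)
      fix v assume "lform a v = 0"
      then show "\<forall>i<3. v i = lform ?b1 v * ?y1 i + lform ?b2 v * ?y2 i"
        using 2 unfolding all3 lform_exp by (simp add: field_simps; algebra)
      qed
    next
      show "\<forall>g. lform g ?y1 = 0 \<and> lform g ?y2 = 0 \<longrightarrow> proportional3 g a"
      proof (intro allI impI)
      fix g assume "lform g ?y1 = 0 \<and> lform g ?y2 = 0"
      then have e: "g 0 * a 1 = g 1 * a 0" "g 2 * a 1 = g 1 * a 2" unfolding lform_exp by (simp_all add: algebra_simps)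
      have "g 0 * a 2 = g 2 * a 0"
      proof -
        have "a 1 * (g 0 * a 2) = a 1 * (g 2 * a 0)" using e by algebra
        then show ?thesis using 2 by simp
      qed
      then show "proportional3 g a" unfolding proportional3_def all3 using e by (simp add: algebra_simps)
      qed
    next
      show "\<forall>s t. (\<forall>i<3. s * ?y1 i + t * ?y2 i = 0) \<longrightarrow> s = 0 \<and> t = 0"
      proof (intro allI impI)
      fix s t assume "\<forall>i<3. s * ?y1 i + t * ?y2 i = 0"
      then show "s = 0 \<and> t = 0" using 2 unfolding all3 by auto
      qed
    qed
  next
    case 3
    let ?y1 = "\<lambda>i::nat. if i = 0 then a 2 else if i = 2 then - a 0 else 0"
    let ?y2 = "\<lambda>i::nat. if i = 1 then a 2 else if i = 2 then - a 1 else 0"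
    let ?b1 = "\<lambda>i::nat. if i = 0 then 1 / a 2 else 0"
    let ?b2 = "\<lambda>i::nat. if i = 1 then 1 / a 2 else 0"
    show ?thesis
    proof (rule exI[of _ ?y1], rule exI[of _ ?y2], rule exI[of _ ?b1], rule exI[of _ ?b2], intro conjI)
      show "lform a ?y1 = 0" "lform a ?y2 = 0" unfolding lform_exp by (simp_all add: algebra_simps)
    next
      show "\<forall>v. lform a v = 0 \<longrightarrow> (\<forall>i<3. v i = lform ?b1 v * ?y1 i + lform ?b2 v * ?y2 i)"
      proof (rule allI, rule impI)
      fix v assume "lform a v = 0"
      then show "\<forall>i<3. v i = lform ?b1 v * ?y1 i + lform ?b2 v * ?y2 i"
        using 3 unfolding all3 lform_exp by (simp add: field_simps; algebra)
      qed
    next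
      show "\<forall>g. lform g ?y1 = 0 \<and> lform g ?y2 = 0 \<longrightarrow> proportional3 g a"
      proof (intro allI impI)
      fix g assume "lform g ?y1 = 0 \<and> lform g ?y2 = 0"
      then have e: "g 0 * a 2 = g 2 * a 0" "g 1 * a 2 = g 2 * a 1" unfolding lform_exp by (simp_all add: algebra_simps)
      have "g 0 * a 1 = g 1 * a 0"
      proof -
        have "a 2 * (g 0 * a 1) = a 2 * (g 1 * a 0)" using e by algebra
        then show ?thesis using 3 by simp
      qed
      then show "proportional3 g a" unfolding proportional3_def all3 using e by (simp add: algebra_simps)
      qed
    next
      show "\<forall>s t. (\<forall>i<3. s * ?y1 i + t * ?y2 i = 0) \<longrightarrow> s = 0 \<and> t = 0"
      proof (intro allI impI)
      fix s t assume "\<forall>i<3. s * ?y1 i + t * ?y2 i = 0"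
      then show "s = 0 \<and> t = 0" using 3 unfolding all3 by auto
      qed
    qed
  qed
qed

lemma factor2:
  fixes A Bc C :: "'a::field"
  assumes ac: "algebraically_closed TYPE('a)"
    and nd: "\<And>s t. s \<noteq> 0 \<or> t \<noteq> 0 \<Longrightarrow> A * s^2 + Bc * s * t + C * t^2 = 0 \<Longrightarrow>
               \<not> (2 * A * s + Bc * t = 0 \<and> Bc * s + 2 * C * t = 0)"
  shows "\<exists>a1 b1 a2 b2. A = a1 * a2 \<and> Bc = a1 * b2 + a2 * b1 \<and> C = b1 * b2 \<and> a1 * b2 - a2 * b1 \<noteq> 0"
proof (cases "A = 0")
  case True
  have "Bc \<noteq> 0" using nd[of 1 0] True by simp
  then have "A = 0 * Bc \<and> Bc = 0 * C + Bc * 1 \<and> C = 1 * C \<and> 0 * C - Bc * 1 \<noteq> 0" using True by simp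
  then show ?thesis by blast
next
  case False
  have "degree [:C, Bc, A:] = 2" using False by simp
  then obtain x1 where "poly [:C, Bc, A:] x1 = 0"
    using ac unfolding algebraically_closed_def by (metis zero_less_numeral)
  then have r: "C + Bc * x1 + A * x1 * x1 = 0" by (simp add: algebra_simps)
  define x2 where "x2 = - Bc / A - x1"
  have sum: "A * (x1 + x2) = - Bc" unfolding x2_def using False by (simp add: field_simps)
  have prod: "A * x1 * x2 = C"
  proof -
    have "A * x1 * x2 = x1 * (A * (x1 + x2)) - A * x1 * x1" by (simp add: algebra_simps)
    also have "\<dots> = - Bc * x1 - A * x1 * x1" using sum by simp
    also have "\<dots> = C" using r by algebra
    finally show ?thesis .
  qed
  have ne: "x1 \<noteq> x2"
  proof
    assume eq: "x1 = x2"
    have "2 * A * x1 + Bc = 0" using sum eq by (simp add: algebra_simps)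
    moreover have "Bc * x1 + 2 * C = 0"
    proof -
      have "Bc * x1 + 2 * C = - (A * (x1 + x2)) * x1 + 2 * (A * x1 * x2)" using sum prod by simp
      also have "\<dots> = 0" using eq by (simp add: algebra_simps)
      finally show ?thesis .
    qed
    moreover have "A * x1^2 + Bc * x1 * 1 + C * 1^2 = 0" using r by (simp add: algebra_simps power2_eq_square)
    ultimately show False using nd[of x1 1] by simp
  qed
  show ?thesis
  proof (rule exI[of _ "1::'a"], rule exI[of _ "-x1"], rule exI[of _ A], rule exI[of _ "-A * x2"], intro conjI)
    show "A = 1 * A" by simp
    show "Bc = 1 * (- A * x2) + A * - x1" using sum by algebra
    show "C = - x1 * (- A * x2)" using prod by (simp add: algebra_simps)
    show "1 * (- A * x2) - A * - x1 \<noteq> 0" using ne False by (simp add: algebra_simps)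
  qed
qed

theorem corollary2p2:
  fixes av :: "'a::field \<Rightarrow> real"
    and f :: "nat \<Rightarrow> 'a \<Rightarrow> 'a"
    and a :: "nat \<Rightarrow> 'a"
    and q :: "nat \<Rightarrow> nat \<Rightarrow> 'a"
  assumes "algebraically_closed TYPE('a)"
    and "nonarch_abs av"
    and "av_complete av"
    and "analytic_curve av f"
    and "nonconstant_curve f"
    and "is_line a"
    and "nonsingular_conic q"
    and "transversal a q"
    and "\<forall>z. lform a (\<lambda>i. f i z) \<noteq> 0 \<and> qform q (\<lambda>i. f i z) \<noteq> 0"
  shows "\<exists>p. nonzero3 p \<and> lform a p = 0 \<and> qform q p = 0 \<and>
             (\<forall>z. lform (qgrad q p) (\<lambda>i. f i z) = 0)"
proof -
  interpret nac av
    by (intro nac.intro naf.intro nac_axioms.intro) (use assms in auto)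
  have ef: "av_entire av (f i)" if "i < 3" for i
    using assms(4) that unfolding analytic_curve_def by blast
  have ef0: "av_entire av (f 0)" and ef1: "av_entire av (f 1)" and ef2: "av_entire av (f 2)"
    using ef by auto
  have elf: "av_entire av (\<lambda>z. lform b (\<lambda>i. f i z))" for b
    unfolding lform_exp by (intro entire_add entire_cmult ef0 ef1 ef2)
  have m: "av_entire av (\<lambda>z. k * f i z * f j z)" if "i < 3" "j < 3" for k i j
    by (rule entire_mult[OF entire_cmult[OF ef[OF that(1)]] ef[OF that(2)]])
  have eqf: "av_entire av (\<lambda>z. qform q (\<lambda>i. f i z))"
    unfolding qform_exp
    by (intro entire_add m) simp_all
  define f0 where "f0 = (\<lambda>i. f i 0)"
  have lconst: "lform a (\<lambda>i. f i z) = lform a f0" for z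
    unfolding f0_def by (rule entire_nonvanishing_const[OF elf]) (use assms(9) in blast)
  have qconst: "qform q (\<lambda>i. f i z) = qform q f0" for z
    unfolding f0_def by (rule entire_nonvanishing_const[OF eqf]) (use assms(9) in blast)
  have "nonzero3 a" using assms(6) unfolding is_line_def .
  from basisW[OF this] obtain y1 y2 b1 b2 where yall: "lform a y1 = 0 \<and> lform a y2 = 0 \<and>
     (\<forall>v. lform a v = 0 \<longrightarrow> (\<forall>i<3. v i = lform b1 v * y1 i + lform b2 v * y2 i)) \<and>
     (\<forall>g. lform g y1 = 0 \<and> lform g y2 = 0 \<longrightarrow> proportional3 g a) \<and>
     (\<forall>s t. (\<forall>i<3. s * y1 i + t * y2 i = 0) \<longrightarrow> s = 0 \<and> t = 0)"
    by blast
  have ya: "lform a y1 = 0" "lform a y2 = 0" using yall by blast+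
  have yspan: "\<And>v. lform a v = 0 \<Longrightarrow> (\<forall>i<3. v i = lform b1 v * y1 i + lform b2 v * y2 i)"
    using yall by blast
  have yprop: "\<And>g. lform g y1 = 0 \<Longrightarrow> lform g y2 = 0 \<Longrightarrow> proportional3 g a"
    using yall by blast
  have yind: "\<And>s t. (\<forall>i<3. s * y1 i + t * y2 i = 0) \<Longrightarrow> s = 0 \<and> t = 0"
    using yall by blast
  define v where "v = (\<lambda>z i. f i z - f0 i)"
  have va: "lform a (v z) = 0" for z
    unfolding v_def lform_diff using lconst[of z] by simp
  define s where "s = (\<lambda>z. lform b1 (v z))"
  define t where "t = (\<lambda>z. lform b2 (v z))"
  have dec: "\<And>i. i < 3 \<Longrightarrow> v z i = s z * y1 i + t z * y2 i" for z
    using yspan[OF va[of z]] unfolding s_def t_def by blast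
  define A where "A = qform q y1"
  define Bc where "Bc = bf q y1 y2"
  define C where "C = qform q y2"
  have b11: "bf q y1 y1 = 2 * A" unfolding A_def by (rule bf_self)
  have b22: "bf q y2 y2 = 2 * C" unfolding C_def by (rule bf_self)
  have b21: "bf q y2 y1 = Bc" unfolding Bc_def by (rule bf_sym)
  have pt_nonzero: "nonzero3 (\<lambda>i. sg * y1 i + tg * y2 i)" if "sg \<noteq> 0 \<or> tg \<noteq> 0" for sg tg
  proof (rule ccontr)
    assume "\<not> nonzero3 (\<lambda>i. sg * y1 i + tg * y2 i)"
    then have "\<forall>i<3. sg * y1 i + tg * y2 i = 0" unfolding nonzero3_def by auto
    then show False using yind that by blast
  qed
  have pt_line: "lform a (\<lambda>i. sg * y1 i + tg * y2 i) = 0" for sg tg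
    unfolding lform_lin ya by simp
  have pt_conic: "qform q (\<lambda>i. sg * y1 i + tg * y2 i) = A * sg^2 + Bc * sg * tg + C * tg^2" for sg tg
    unfolding qform_lin2 A_def Bc_def C_def by (simp add: algebra_simps)
  have pt_g1: "lform (qgrad q (\<lambda>i. sg * y1 i + tg * y2 i)) y1 = 2 * A * sg + Bc * tg" for sg tg
    unfolding bf_def[symmetric] bf_lin1 b11 b21 by (simp add: algebra_simps)
  have pt_g2: "lform (qgrad q (\<lambda>i. sg * y1 i + tg * y2 i)) y2 = Bc * sg + 2 * C * tg" for sg tg
    unfolding bf_def[symmetric] bf_lin1 b22 Bc_def by (simp add: algebra_simps)
  have nd: "\<not> (2 * A * sg + Bc * tg = 0 \<and> Bc * sg + 2 * C * tg = 0)"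
    if "sg \<noteq> 0 \<or> tg \<noteq> 0" "A * sg^2 + Bc * sg * tg + C * tg^2 = 0" for sg tg
  proof
    assume h: "2 * A * sg + Bc * tg = 0 \<and> Bc * sg + 2 * C * tg = 0"
    let ?p = "\<lambda>i. sg * y1 i + tg * y2 i"
    have "proportional3 (qgrad q ?p) a" using h by (intro yprop) (simp_all add: pt_g1 pt_g2)
    moreover have "nonzero3 ?p" "lform a ?p = 0" "qform q ?p = 0"
      using pt_nonzero[OF that(1)] pt_line pt_conic that(2) by auto
    ultimately show False using assms(8) unfolding transversal_def by blast
  qed
  obtain al1 be1 al2 be2 where fac: "A = al1 * al2" "Bc = al1 * be2 + al2 * be1" "C = be1 * be2"
    and Dl: "al1 * be2 - al2 * be1 \<noteq> 0"
    using factor2[OF assms(1), of A Bc C] nd by blast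
  define mu1 where "mu1 = bf q f0 y1"
  define mu2 where "mu2 = bf q f0 y2"
  have fz: "(\<lambda>i. f i z) = (\<lambda>i. f0 i + v z i)" for z unfolding v_def by simp
  have key: "s z * mu1 + t z * mu2 + (A * (s z)^2 + Bc * s z * t z + C * (t z)^2) = 0" for z
  proof -
    have "qform q (v z) = qform q (\<lambda>i. s z * y1 i + t z * y2 i)" by (rule qform_cong) (rule dec)
    also have "\<dots> = A * (s z)^2 + Bc * s z * t z + C * (t z)^2" by (rule pt_conic)
    finally have e1: "qform q (v z) = A * (s z)^2 + Bc * s z * t z + C * (t z)^2" .
    have "bf q f0 (v z) = bf q f0 (\<lambda>i. s z * y1 i + t z * y2 i)" by (rule bf_cong2) (rule dec)
    also have "\<dots> = s z * mu1 + t z * mu2" unfolding bf_lin2 mu1_def mu2_def ..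
    finally have e2: "bf q f0 (v z) = s z * mu1 + t z * mu2" .
    have "qform q f0 = qform q (\<lambda>i. f0 i + v z i)" using qconst[of z] fz[of z] by simp
    also have "\<dots> = qform q f0 + qform q (v z) + bf q f0 (v z)" by (rule qform_add)
    finally show ?thesis using e1 e2 by (simp add: algebra_simps)
  qed
  define Dl' where "Dl' = al1 * be2 - al2 * be1"
  define al where "al = (al1 * mu2 - mu1 * be1) / Dl'"
  define be where "be = (be2 * mu1 - al2 * mu2) / Dl'"
  have Dl': "Dl' \<noteq> 0" using Dl unfolding Dl'_def .
  have Dal: "Dl' * al = al1 * mu2 - mu1 * be1" unfolding al_def using Dl' by simp
  have Dbe: "Dl' * be = be2 * mu1 - al2 * mu2" unfolding be_def using Dl' by simp
  have "Dl' * (al * al2 + be * al1) = Dl' * mu1"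
  proof -
    have "Dl' * (al * al2 + be * al1) = (Dl' * al) * al2 + (Dl' * be) * al1" by (simp add: algebra_simps)
    also have "\<dots> = Dl' * mu1" unfolding Dal Dbe by (simp add: Dl'_def algebra_simps)
    finally show ?thesis .
  qed
  then have mu1eq: "mu1 = al * al2 + be * al1" using Dl' by simp
  have "Dl' * (al * be2 + be * be1) = Dl' * mu2"
  proof -
    have "Dl' * (al * be2 + be * be1) = (Dl' * al) * be2 + (Dl' * be) * be1" by (simp add: algebra_simps)
    also have "\<dots> = Dl' * mu2" unfolding Dal Dbe by (simp add: Dl'_def algebra_simps)
    finally show ?thesis .
  qed
  then have mu2eq: "mu2 = al * be2 + be * be1" using Dl' by simp
  define h1 where "h1 = (\<lambda>z. al1 * s z + be1 * t z + al)"
  define h2 where "h2 = (\<lambda>z. al2 * s z + be2 * t z + be)"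
  have hprod: "h1 z * h2 z = al * be" for z
  proof -
    have "h1 z * h2 z - al * be = s z * mu1 + t z * mu2 + (A * (s z)^2 + Bc * s z * t z + C * (t z)^2)"
      unfolding h1_def h2_def mu1eq mu2eq fac by (simp add: algebra_simps power2_eq_square)
    then show ?thesis using key[of z] by simp
  qed
  have sv: "lform b (v z) = lform b (\<lambda>i. f i z) - lform b f0" for b z
    unfolding v_def lform_diff ..
  have es: "av_entire av s" and et: "av_entire av t"
    unfolding s_def t_def sv by (intro entire_diff elf entire_const)+
  have eh1: "av_entire av h1" unfolding h1_def
    by (intro entire_add entire_cmult es et entire_const)
  have eh2: "av_entire av h2" unfolding h2_def
    by (intro entire_add entire_cmult es et entire_const)
  have v0: "v 0 = (\<lambda>i. 0)" unfolding v_def f0_def by simp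
  have s0: "s 0 = 0" "t 0 = 0" unfolding s_def t_def v0 lform_zero by simp_all
  have tangent: "lform (qgrad q (\<lambda>i. sg * y1 i + tg * y2 i)) (\<lambda>i. f i z) =
      sg * mu1 + tg * mu2 + s z * (2 * A * sg + Bc * tg) + t z * (Bc * sg + 2 * C * tg)" for sg tg z
  proof -
    let ?p = "\<lambda>i. sg * y1 i + tg * y2 i"
    have "lform (qgrad q ?p) (\<lambda>i. f i z) = bf q ?p (\<lambda>i. f0 i + v z i)" unfolding bf_def fz ..
    also have "\<dots> = bf q ?p f0 + bf q ?p (v z)" by (rule bf_add2)
    also have "bf q ?p (v z) = bf q ?p (\<lambda>i. s z * y1 i + t z * y2 i)" by (rule bf_cong2) (rule dec)
    also have "\<dots> = s z * bf q ?p y1 + t z * bf q ?p y2" by (rule bf_lin2)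
    also have "bf q ?p y1 = 2 * A * sg + Bc * tg" using pt_g1 unfolding bf_def .
    also have "bf q ?p y2 = Bc * sg + 2 * C * tg" using pt_g2 unfolding bf_def .
    also have "bf q ?p f0 = sg * mu1 + tg * mu2"
      unfolding bf_lin1 mu1_def mu2_def by (simp add: bf_sym[of q y1] bf_sym[of q y2])
    finally show ?thesis by (simp add: algebra_simps)
  qed
  have concl: "\<exists>p. nonzero3 p \<and> lform a p = 0 \<and> qform q p = 0 \<and> (\<forall>z. lform (qgrad q p) (\<lambda>i. f i z) = 0)"
    if "sg \<noteq> 0 \<or> tg \<noteq> 0" "A * sg^2 + Bc * sg * tg + C * tg^2 = 0"
       "\<And>z. sg * mu1 + tg * mu2 + s z * (2 * A * sg + Bc * tg) + t z * (Bc * sg + 2 * C * tg) = 0"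
    for sg tg
  proof (intro exI conjI allI)
    let ?p = "\<lambda>i. sg * y1 i + tg * y2 i"
    show "nonzero3 ?p" by (rule pt_nonzero[OF that(1)])
    show "lform a ?p = 0" by (rule pt_line)
    show "qform q ?p = 0" unfolding pt_conic by (rule that(2))
    fix z show "lform (qgrad q ?p) (\<lambda>i. f i z) = 0" unfolding tangent by (rule that(3))
  qed
  show ?thesis
  proof (cases "al * be = 0")
    case False
    have nz1: "h1 z \<noteq> 0" for z using hprod[of z] False by auto
    have nz2: "h2 z \<noteq> 0" for z using hprod[of z] False by auto
    have h10: "h1 0 = al" "h2 0 = be" unfolding h1_def h2_def s0 by simp_all
    have h1c: "h1 z = al" for z
      using entire_nonvanishing_const[OF eh1 nz1, of z] h10 by simp
    have h2c: "h2 z = be" for z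
      using entire_nonvanishing_const[OF eh2 nz2, of z] h10 by simp
    have st0: "s z = 0 \<and> t z = 0" for z
    proof -
      have e1: "al1 * s z + be1 * t z = 0" using h1c[of z] unfolding h1_def by simp
      have e2: "al2 * s z + be2 * t z = 0" using h2c[of z] unfolding h2_def by simp
      have "Dl' * s z = be2 * (al1 * s z + be1 * t z) - be1 * (al2 * s z + be2 * t z)"
        unfolding Dl'_def by (simp add: algebra_simps)
      then have "Dl' * s z = 0" using e1 e2 by simp
      moreover have "Dl' * t z = al1 * (al2 * s z + be2 * t z) - al2 * (al1 * s z + be1 * t z)"
        unfolding Dl'_def by (simp add: algebra_simps)
      then have "Dl' * t z = 0" using e1 e2 by simp
      ultimately show ?thesis using Dl' by simp
    qed
    have fc: "f i z = f i 0" if "i < 3" for i z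
      using dec[OF that, of z] st0[of z] unfolding v_def f0_def by simp
    have "proportional3 (\<lambda>i. f i z) (\<lambda>i. f i w)" for z w
      unfolding proportional3_def
    proof (intro allI impI)
      fix i j :: nat assume "i < 3" "j < 3"
      then have "f i z = f i 0" "f j w = f j 0" "f j z = f j 0" "f i w = f i 0"
        using fc by blast+
      then show "f i z * f j w = f j z * f i w" by (simp only: mult.commute)
    qed
    then show ?thesis using assms(5) unfolding nonconstant_curve_def by blast
  next
    case True
    have "h1 z * h2 z = 0" for z using hprod True by simp
    then have "(\<forall>z. h1 z = 0) \<or> (\<forall>z. h2 z = 0)" using entire_prod_zero[OF eh1 eh2] by blast
    then show ?thesis
    proof
      assume h: "\<forall>z. h1 z = 0"
      show ?thesis
      proof (rule concl[of be1 "- al1"])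
        show "be1 \<noteq> 0 \<or> - al1 \<noteq> 0" using Dl by auto
        show "A * be1^2 + Bc * be1 * - al1 + C * (- al1)^2 = 0"
          unfolding fac by (simp add: algebra_simps power2_eq_square)
        fix z
        have "be1 * mu1 + - al1 * mu2 + s z * (2 * A * be1 + Bc * - al1) + t z * (Bc * be1 + 2 * C * - al1)
              = - Dl' * h1 z"
          unfolding fac mu1eq mu2eq h1_def Dl'_def by (simp add: algebra_simps)
        then show "be1 * mu1 + - al1 * mu2 + s z * (2 * A * be1 + Bc * - al1) + t z * (Bc * be1 + 2 * C * - al1) = 0"
          using h by simp
      qed
    next
      assume h: "\<forall>z. h2 z = 0"
      show ?thesis
      proof (rule concl[of be2 "- al2"])
        show "be2 \<noteq> 0 \<or> - al2 \<noteq> 0" using Dl by auto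
        show "A * be2^2 + Bc * be2 * - al2 + C * (- al2)^2 = 0"
          unfolding fac by (simp add: algebra_simps power2_eq_square)
        fix z
        have "be2 * mu1 + - al2 * mu2 + s z * (2 * A * be2 + Bc * - al2) + t z * (Bc * be2 + 2 * C * - al2)
              = Dl' * h2 z"
          unfolding fac mu1eq mu2eq h2_def Dl'_def by (simp add: algebra_simps)
        then show "be2 * mu1 + - al2 * mu2 + s z * (2 * A * be2 + Bc * - al2) + t z * (Bc * be2 + 2 * C * - al2) = 0"
          using h by simp
      qed
    qed
  qed
qed


end
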